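(* Let $n,k$ be integers with $2<2k\le n$. The feasible set of the integer program $( * )$ is non-empty if and only if $\mathrm{Pet}(n,k)$ contains an odd cycle. Moreover, suppose $(\mathsf{u},\mathsf{v}_+,\mathsf{v}_-,r,t)$ is a solution of $( * )$. If $( * )$ has some trivial solution, then $g_{odd}(\mathrm{Pet}(n,k))=2r+1$; if all solutions of $( * )$ are nontrivial, then $g_{odd}(\mathrm{Pet}(n,k))=2r+3$.
   Context: For integers $n,k$ with $2<2k\le n$, the generalized Petersen graph $\mathrm{Pet}(n,k)$ has vertex set $\{u_0,\dots,u_{n-1}\}\cup\{v_0,\dots,v_{n-1}\}$ and edge set $\{u_iu_{i+1}\}\cup\{u_iv_i\}\cup\{v_iv_{i+k}\}$, indices modulo $n$. The integer program $( * )$ is: minimize $\mathsf{u}+\mathsf{v}_++\mathsf{v}_-$ over integers $\mathsf{u},\mathsf{v}_+,\mathsf{v}_-,r\ge 0$ and $t\in\mathbb{Z}$ subject to $\mathsf{u}+k(\mathsf{v}_+-\mathsf{v}_-)=tn$ and $\mathsf{u}+\mathsf{v}_++\mathsf{v}_-=2r+1$. A feasible point is any tuple satisfying these constraints; a solution is a minimizer; a solution is trivial if $\mathsf{u}=0$ or $\mathsf{v}_++\mathsf{v}_-=0$, and nontrivial otherwise (note all solutions have the same value $2r+1$). $g_{odd}(G)$ is the length of a shortest odd cycle of $G$. *)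

theory Defs
  imports Main
begin

text \<open>Generalized Petersen graph Pet(n,k). Vertex (False,i) is u_i, vertex (True,i) is v_i,
  for 0 \<le> i < n. Indices are taken modulo n.\<close>

definition pet_verts :: "nat \<Rightarrow> (bool \<times> nat) set" where
  "pet_verts n = {x. snd x < n}"

definition pet_adj :: "nat \<Rightarrow> nat \<Rightarrow> bool \<times> nat \<Rightarrow> bool \<times> nat \<Rightarrow> bool" where
  "pet_adj n k x y \<longleftrightarrow> x \<in> pet_verts n \<and> y \<in> pet_verts n \<and>
     ((\<not> fst x \<and> \<not> fst y \<and> (snd y = (snd x + 1) mod n \<or> snd x = (snd y + 1) mod n))
    \<or> (fst x \<noteq> fst y \<and> snd x = snd y)
    \<or> (fst x \<and> fst y \<and> (snd y = (snd x + k) mod n \<or> snd x = (snd y + k) mod n)))"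

definition is_cycle :: "('a \<Rightarrow> 'a \<Rightarrow> bool) \<Rightarrow> 'a list \<Rightarrow> bool" where
  "is_cycle adj c \<longleftrightarrow> length c \<ge> 3 \<and> distinct c \<and>
     (\<forall>i < length c. adj (c ! i) (c ! ((i + 1) mod length c)))"

definition has_odd_cycle :: "('a \<Rightarrow> 'a \<Rightarrow> bool) \<Rightarrow> bool" where
  "has_odd_cycle adj \<longleftrightarrow> (\<exists>c. is_cycle adj c \<and> odd (length c))"

definition odd_girth :: "('a \<Rightarrow> 'a \<Rightarrow> bool) \<Rightarrow> nat" where
  "odd_girth adj = (LEAST L. \<exists>c. is_cycle adj c \<and> odd (length c) \<and> length c = L)"

definition ip_feasible :: "nat \<Rightarrow> nat \<Rightarrow> nat \<Rightarrow> nat \<Rightarrow> nat \<Rightarrow> nat \<Rightarrow> int \<Rightarrow> bool" where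
  "ip_feasible n k u vp vm r t \<longleftrightarrow>
     int u + int k * (int vp - int vm) = t * int n \<and> u + vp + vm = 2 * r + 1"

definition ip_solution :: "nat \<Rightarrow> nat \<Rightarrow> nat \<Rightarrow> nat \<Rightarrow> nat \<Rightarrow> nat \<Rightarrow> int \<Rightarrow> bool" where
  "ip_solution n k u vp vm r t \<longleftrightarrow> ip_feasible n k u vp vm r t \<and>
     (\<forall>u' vp' vm' r' t'. ip_feasible n k u' vp' vm' r' t' \<longrightarrow> u + vp + vm \<le> u' + vp' + vm')"

definition ip_trivial :: "nat \<Rightarrow> nat \<Rightarrow> nat \<Rightarrow> bool" where
  "ip_trivial u vp vm \<longleftrightarrow> u = 0 \<or> vp + vm = 0"

end

theory Submission
  imports Defs
begin


lemma feas_of_UV: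
  assumes "int n dvd U + int k * V" "odd (\<bar>U\<bar> + \<bar>V\<bar>)"
  shows "\<exists>u vp vm r t. ip_feasible n k u vp vm r t \<and> int (u+vp+vm) = \<bar>U\<bar>+\<bar>V\<bar>
     \<and> (U = 0 \<longrightarrow> u = 0) \<and> (V = 0 \<longrightarrow> vp+vm = 0)"
proof -
  obtain q where q: "U + int k * V = int n * q" using assms(1) by (auto elim: dvdE)
  have "\<exists>u vp vm t. int u + int k * (int vp - int vm) = t * int n \<and> int (u+vp+vm) = \<bar>U\<bar>+\<bar>V\<bar>
     \<and> (U = 0 \<longrightarrow> u = 0) \<and> (V = 0 \<longrightarrow> vp+vm = 0)"
  proof (cases "U \<ge> 0")
    case True
    show ?thesis
    proof (cases "V \<ge> 0")
      case True
      then show ?thesis using \<open>U \<ge> 0\<close> q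
        by (intro exI[of _ "nat U"] exI[of _ "nat V"] exI[of _ 0] exI[of _ q]) (auto simp: algebra_simps)
    next
      case False
      then show ?thesis using \<open>U \<ge> 0\<close> q
        by (intro exI[of _ "nat U"] exI[of _ 0] exI[of _ "nat (-V)"] exI[of _ q]) (auto simp: algebra_simps)
    qed
  next
    case False
    show ?thesis
    proof (cases "V \<ge> 0")
      case True
      then show ?thesis using \<open>\<not> U \<ge> 0\<close> q
        by (intro exI[of _ "nat (-U)"] exI[of _ 0] exI[of _ "nat V"] exI[of _ "-q"]) (auto simp: algebra_simps)
    next
      case False
      then show ?thesis using \<open>\<not> U \<ge> 0\<close> q
        by (intro exI[of _ "nat (-U)"] exI[of _ "nat (-V)"] exI[of _ 0] exI[of _ "-q"]) (auto simp: algebra_simps)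
    qed
  qed
  then obtain u vp vm t where h: "int u + int k * (int vp - int vm) = t * int n"
    "int (u+vp+vm) = \<bar>U\<bar>+\<bar>V\<bar>" "(U = 0 \<longrightarrow> u = 0)" "(V = 0 \<longrightarrow> vp+vm = 0)" by blast
  have "odd (u+vp+vm)" using h(2) assms(2) by (metis even_of_nat_iff)
  then obtain r where "u+vp+vm = 2*r+1" using oddE by blast
  then show ?thesis using h unfolding ip_feasible_def by blast
qed

lemma feas_UV:
  assumes "ip_feasible n k u vp vm r t"
  shows "int n dvd int u + int k * (int vp - int vm)" "odd (\<bar>int u\<bar> + \<bar>int vp - int vm\<bar>)"
    "\<bar>int u\<bar> + \<bar>int vp - int vm\<bar> \<le> int (u+vp+vm)"
proof -
  show "int n dvd int u + int k * (int vp - int vm)" using assms unfolding ip_feasible_def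
    by (metis dvd_triv_right mult.commute)
  have "odd (int (u+vp+vm))" using assms unfolding ip_feasible_def by simp
  moreover have "even (int (u+vp+vm) - (\<bar>int u\<bar> + \<bar>int vp - int vm\<bar>))"
  proof (cases "vp \<ge> vm")
    case True
    then have "int (u+vp+vm) - (\<bar>int u\<bar> + \<bar>int vp - int vm\<bar>) = 2 * int vm" by simp
    then show ?thesis by simp
  next
    case False
    then have "int (u+vp+vm) - (\<bar>int u\<bar> + \<bar>int vp - int vm\<bar>) = 2 * int vp" by simp
    then show ?thesis by simp
  qed
  ultimately show "odd (\<bar>int u\<bar> + \<bar>int vp - int vm\<bar>)"
    by (metis add_diff_cancel_left' even_add diff_add_cancel)
  show "\<bar>int u\<bar> + \<bar>int vp - int vm\<bar> \<le> int (u+vp+vm)" by simp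
qed

lemma sol_min:
  assumes "ip_solution n k u vp vm r t" "int n dvd U + int k * V" "odd (\<bar>U\<bar> + \<bar>V\<bar>)"
  shows "int (u+vp+vm) \<le> \<bar>U\<bar>+\<bar>V\<bar>"
proof -
  obtain u' vp' vm' r' t' where "ip_feasible n k u' vp' vm' r' t'" "int (u'+vp'+vm') = \<bar>U\<bar>+\<bar>V\<bar>"
    using feas_of_UV[OF assms(2,3)] by blast
  with assms(1) show ?thesis unfolding ip_solution_def by (metis of_nat_le_iff)
qed

lemma sol_exists:
  assumes "ip_feasible n k u vp vm r t"
  shows "\<exists>u vp vm r t. ip_solution n k u vp vm r t"
proof -
  let ?P = "\<lambda>m. \<exists>u vp vm r t. ip_feasible n k u vp vm r t \<and> u+vp+vm = m"
  have "?P (u+vp+vm)" using assms by blast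
  then have "?P (LEAST m. ?P m)" by (rule LeastI)
  then obtain u vp vm r t where h: "ip_feasible n k u vp vm r t" "u+vp+vm = (LEAST m. ?P m)" by blast
  have "\<forall>u' vp' vm' r' t'. ip_feasible n k u' vp' vm' r' t' \<longrightarrow> u + vp + vm \<le> u' + vp' + vm'"
  proof (intro allI impI)
    fix u' vp' vm' r' t' assume "ip_feasible n k u' vp' vm' r' t'"
    then have "?P (u'+vp'+vm')" by blast
    then show "u + vp + vm \<le> u' + vp' + vm'" unfolding h(2) by (rule Least_le)
  qed
  then show ?thesis using h(1) unfolding ip_solution_def by blast
qed

lemma sol_same:
  assumes "ip_solution n k u vp vm r t" "ip_solution n k u' vp' vm' r' t'"
  shows "u+vp+vm = u'+vp'+vm'"
  using assms unfolding ip_solution_def by (meson antisym)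

lemma feas_sol:
  assumes "ip_solution n k u vp vm r t" "ip_feasible n k u' vp' vm' r' t'" "u'+vp'+vm' = u+vp+vm"
  shows "ip_solution n k u' vp' vm' r' t'"
  using assms unfolding ip_solution_def by metis


definition du :: "nat \<Rightarrow> bool\<times>nat \<Rightarrow> bool\<times>nat \<Rightarrow> int" where
 "du n x y = (if \<not>fst x \<and> \<not>fst y then (if snd y = (snd x + 1) mod n then 1 else -1) else 0)"
definition dv :: "nat \<Rightarrow> nat \<Rightarrow> bool\<times>nat \<Rightarrow> bool\<times>nat \<Rightarrow> int" where
 "dv n k x y = (if fst x \<and> fst y then (if snd y = (snd x + k) mod n then 1 else -1) else 0)"
definition sp :: "bool\<times>nat \<Rightarrow> bool\<times>nat \<Rightarrow> int" where
 "sp x y = (if fst x = fst y then 0 else 1)"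

lemma H1: "int n dvd int ((a+b) mod n) - int a - int b"
proof -
  have "int ((a+b) mod n) = (int a + int b) mod int n" by (simp add: zmod_int)
  then show ?thesis by (metis diff_diff_eq mod_0 mod_diff_left_eq dvd_eq_mod_eq_0 diff_self)
qed

lemma step_dvd:
  assumes "pet_adj n k x y"
  shows "int n dvd int (snd y) - int (snd x) - du n x y - int k * dv n k x y"
proof -
  have a: "int n dvd int ((snd x+1) mod n) - int (snd x) - 1" using H1[of n "snd x" 1] by simp
  have b: "int n dvd int ((snd y+1) mod n) - int (snd y) - 1" using H1[of n "snd y" 1] by simp
  have c: "int n dvd int ((snd x+k) mod n) - int (snd x) - int k" using H1[of n "snd x" k] by simp
  have d: "int n dvd int ((snd y+k) mod n) - int (snd y) - int k" using H1[of n "snd y" k] by simp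
  show ?thesis
  proof (cases "fst x")
    case fx: True
    show ?thesis
    proof (cases "fst y")
      case True
      then show ?thesis using fx assms a b c d unfolding pet_adj_def du_def dv_def
        by (auto simp: algebra_simps dest: dvd_minus_iff[THEN iffD2])
    next
      case False
      then show ?thesis using fx assms unfolding pet_adj_def du_def dv_def by auto
    qed
  next
    case fx: False
    show ?thesis
    proof (cases "fst y")
      case True
      then show ?thesis using fx assms unfolding pet_adj_def du_def dv_def by auto
    next
      case False
      then show ?thesis using fx assms a b c d unfolding pet_adj_def du_def dv_def
        by (auto simp: algebra_simps dest: dvd_minus_iff[THEN iffD2])
    qed
  qed
qed

lemma step_one:
  assumes "pet_adj n k x y"
  shows "\<bar>du n x y\<bar> + \<bar>dv n k x y\<bar> + sp x y = 1"
  using assms unfolding pet_adj_def du_def dv_def sp_def by auto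

lemma step_par:
  "even (sp x y - (of_bool (fst y) - of_bool (fst x)))"
  unfolding sp_def by auto

lemma rot_sum:
  fixes g :: "nat \<Rightarrow> int"
  assumes "0 < L" shows "(\<Sum>i<L. g ((i+1) mod L)) = (\<Sum>i<L. g i)"
proof -
  obtain M where L: "L = Suc M" using assms by (cases L) auto
  have "(\<Sum>i<Suc M. g ((i+1) mod Suc M)) = (\<Sum>i<M. g ((i+1) mod Suc M)) + g 0" by simp
  also have "(\<Sum>i<M. g ((i+1) mod Suc M)) = (\<Sum>i<M. g (Suc i))" by (intro sum.cong) auto
  also have "\<dots> + g 0 = (\<Sum>i<Suc M. g i)" by (subst sum.lessThan_Suc_shift) simp
  finally show ?thesis using L by simp
qed


lemma even_abs_diff: "even (\<bar>x::int\<bar> - x)"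
  by (cases "x \<ge> 0") auto

lemma LB:
  assumes cyc: "is_cycle (pet_adj n k) c" and oddL: "odd (length c)"
  shows "\<exists>u vp vm r t. ip_feasible n k u vp vm r t \<and> u+vp+vm \<le> length c
           \<and> (ip_trivial u vp vm \<or> u+vp+vm+2 \<le> length c)"
proof -
  define L where "L = length c"
  have L0: "0 < L" using cyc unfolding is_cycle_def L_def by auto
  define X where "X i = c ! i" for i
  define Y where "Y i = c ! ((i+1) mod L)" for i
  have adj: "\<And>i. i < L \<Longrightarrow> pet_adj n k (X i) (Y i)"
    using cyc unfolding is_cycle_def X_def Y_def L_def by auto
  define DU where "DU = (\<Sum>i<L. du n (X i) (Y i))"
  define DV where "DV = (\<Sum>i<L. dv n k (X i) (Y i))"
  define S where "S = (\<Sum>i<L. sp (X i) (Y i))"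
  define A where "A = (\<Sum>i<L. \<bar>du n (X i) (Y i)\<bar>)"
  define B where "B = (\<Sum>i<L. \<bar>dv n k (X i) (Y i)\<bar>)"
  have rotY: "(\<Sum>i<L. g (Y i)) = (\<Sum>i<L. g (X i))" for g :: "bool\<times>nat \<Rightarrow> int"
    using rot_sum[OF L0, of "\<lambda>i. g (c ! i)"] unfolding X_def Y_def by simp
  have "int n dvd (\<Sum>i<L. int (snd (Y i)) - int (snd (X i)) - du n (X i) (Y i) - int k * dv n k (X i) (Y i))"
    by (rule dvd_sum) (use adj step_dvd in auto)
  also have "(\<Sum>i<L. int (snd (Y i)) - int (snd (X i)) - du n (X i) (Y i) - int k * dv n k (X i) (Y i))
     = (\<Sum>i<L. int (snd (Y i))) - (\<Sum>i<L. int (snd (X i))) - DU - int k * DV"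
    unfolding DU_def DV_def by (simp add: sum_subtractf sum_distrib_left)
  also have "\<dots> = - (DU + int k * DV)" using rotY[of "\<lambda>x. int (snd x)"] by simp
  finally have dvd1: "int n dvd DU + int k * DV" by (metis dvd_minus_iff)
  have "even (\<Sum>i<L. sp (X i) (Y i) - (of_bool (fst (Y i)) - of_bool (fst (X i))))"
    by (rule dvd_sum) (rule step_par)
  also have "(\<Sum>i<L. sp (X i) (Y i) - (of_bool (fst (Y i)) - of_bool (fst (X i)))) = S"
    unfolding S_def using rotY[of "\<lambda>x. of_bool (fst x)"] by (simp add: sum_subtractf)
  finally have evS: "even S" .
  have "A + B + S = (\<Sum>i<L. \<bar>du n (X i) (Y i)\<bar> + \<bar>dv n k (X i) (Y i)\<bar> + sp (X i) (Y i))"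
    unfolding A_def B_def S_def by (simp add: sum.distrib)
  also have "\<dots> = (\<Sum>i<L. 1)" by (rule sum.cong) (use adj step_one in auto)
  finally have ABS: "A + B + S = int L" by simp
  have eA: "even (A - DU)" unfolding A_def DU_def sum_subtractf[symmetric]
    by (rule dvd_sum) (rule even_abs_diff)
  have eB: "even (B - DV)" unfolding B_def DV_def sum_subtractf[symmetric]
    by (rule dvd_sum) (rule even_abs_diff)
  have leA: "\<bar>DU\<bar> \<le> A" unfolding A_def DU_def by (rule sum_abs)
  have leB: "\<bar>DV\<bar> \<le> B" unfolding B_def DV_def by (rule sum_abs)
  have Snn: "S \<ge> 0" unfolding S_def sp_def by (intro sum_nonneg) auto
  have oL: "odd (int L)" using oddL L_def by simp
  have odd1: "odd (\<bar>DU\<bar> + \<bar>DV\<bar>)"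
  proof -
    obtain a where a: "A - DU = 2*a" using eA by blast
    obtain b where b: "B - DV = 2*b" using eB by blast
    obtain c where cc: "\<bar>DU\<bar> - DU = 2*c" using even_abs_diff by blast
    obtain d where dd: "\<bar>DV\<bar> - DV = 2*d" using even_abs_diff by blast
    obtain s where s: "S = 2*s" using evS by blast
    obtain l where l: "int L = 2*l+1" using oL by (blast elim: oddE)
    have "\<bar>DU\<bar> + \<bar>DV\<bar> = 2*l - 2*s - 2*a - 2*b + 2*c + 2*d + 1" using a b cc dd s l ABS by linarith
    also have "\<dots> = 2*(l - s - a - b + c + d) + 1" by (simp add: algebra_simps)
    finally show ?thesis by simp
  qed
  have triv: "DU = 0 \<or> DV = 0" if S0: "S = 0"
  proof -
    have sp0: "\<forall>i\<in>{..<L}. sp (X i) (Y i) = 0"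
      using S0 unfolding S_def by (subst sum_nonneg_eq_0_iff[symmetric]) (auto simp: sp_def)
    have fsts: "i < L \<Longrightarrow> fst (c ! i) = fst (c ! 0)" for i
    proof (induction i)
      case 0 then show ?case by simp
    next
      case (Suc i)
      then have "sp (X i) (Y i) = 0" using sp0 by auto
      moreover have "(i+1) mod L = Suc i" using Suc.prems by simp
      ultimately have "fst (c ! i) = fst (c ! Suc i)" unfolding sp_def X_def Y_def
        by (simp split: if_splits)
      then show ?case using Suc.IH Suc.prems by simp
    qed
    have XY: "i < L \<Longrightarrow> fst (X i) = fst (c!0) \<and> fst (Y i) = fst (c!0)" for i
    proof -
      assume "i < L"
      moreover have "(i+1) mod L < L" using L0 by simp
      ultimately show ?thesis unfolding X_def Y_def using fsts by blast
    qed
    show ?thesis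
    proof (cases "fst (c!0)")
      case True
      then have "DU = 0" unfolding DU_def du_def using XY by (intro sum.neutral) auto
      then show ?thesis by simp
    next
      case False
      then have "DV = 0" unfolding DV_def dv_def using XY by (intro sum.neutral) auto
      then show ?thesis by simp
    qed
  qed
  obtain u vp vm r t where F: "ip_feasible n k u vp vm r t" "int (u+vp+vm) = \<bar>DU\<bar>+\<bar>DV\<bar>"
     "(DU = 0 \<longrightarrow> u = 0)" "(DV = 0 \<longrightarrow> vp+vm = 0)"
    using feas_of_UV[OF dvd1 odd1] by blast
  have "S = 0 \<or> S \<ge> 2" using evS Snn by presburger
  then have "u+vp+vm \<le> length c \<and> (ip_trivial u vp vm \<or> u+vp+vm+2 \<le> length c)"
  proof
    assume "S = 0"
    then have "DU = 0 \<or> DV = 0" by (rule triv)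
    then have "ip_trivial u vp vm" using F(3,4) unfolding ip_trivial_def by blast
    moreover have "int (u+vp+vm) \<le> int L" using F(2) leA leB ABS \<open>S = 0\<close> by linarith
    ultimately show ?thesis unfolding L_def by simp
  next
    assume "S \<ge> 2"
    then have "int (u+vp+vm) + 2 \<le> int L" using F(2) leA leB ABS by linarith
    then show ?thesis unfolding L_def by simp
  qed
  then show ?thesis using F(1) by blast
qed


lemma cyc_map:
  assumes "N \<ge> 3" "inj_on f {..<N}" "\<And>i. i < N \<Longrightarrow> adj (f i) (f ((i+1) mod N))"
  shows "is_cycle adj (map f [0..<N])"
proof -
  have "distinct (map f [0..<N])" using assms(2) by (simp add: distinct_map lessThan_atLeast0)
  then show ?thesis unfolding is_cycle_def using assms(1,3) by simp
qed

lemma inner_step: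
  assumes "h = k \<or> h = n - k" "k < n"
  shows "pet_adj n k (True, a mod n) (True, (a+h) mod n)"
  using assms(1)
proof
  assume "h = k" then show ?thesis using assms(2) unfolding pet_adj_def pet_verts_def
    by (simp add: mod_add_left_eq)
next
  assume h: "h = n - k"
  have "((a + h) mod n + k) mod n = (a + h + k) mod n" by (simp add: mod_add_left_eq)
  also have "a + h + k = a + n" using h assms(2) by simp
  finally have "a mod n = ((a + h) mod n + k) mod n" by simp
  then show ?thesis using assms(2) unfolding pet_adj_def pet_verts_def by auto
qed

lemma inner_cycle:
  assumes "0 < k" "k < n" "odd D" "n dvd D*k" "\<And>e. 0 < e \<Longrightarrow> e < D \<Longrightarrow> \<not> n dvd e*k"
  shows "\<exists>c. is_cycle (pet_adj n k) c \<and> odd (length c) \<and> length c = D"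
proof -
  have "D \<noteq> 1" using assms(2,4,1) by (auto dest: dvd_imp_le)
  with assms(3) have D3: "D \<ge> 3" by presburger
  define f where "f i = (True, (i*k) mod n)" for i
  have "inj_on f {..<D}"
  proof (rule inj_onI)
    fix i j assume ij: "i \<in> {..<D}" "j \<in> {..<D}" "f i = f j"
    show "i = j"
    proof (rule ccontr)
      assume "i \<noteq> j"
      then consider "i < j" | "j < i" by linarith
      then show False
      proof cases
        case 1
        have "(i*k) mod n = (j*k) mod n" using ij unfolding f_def by simp
        then have "n dvd j*k - i*k" using 1 by (subst mod_eq_dvd_iff_nat[symmetric]) auto
        then have "n dvd (j-i)*k" by (simp add: diff_mult_distrib)
        moreover have "j - i < D" using ij(2) by auto
        ultimately show False using assms(5)[of "j-i"] 1 by auto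
      next
        case 2
        have "(i*k) mod n = (j*k) mod n" using ij unfolding f_def by simp
        then have "n dvd i*k - j*k" using 2 by (subst mod_eq_dvd_iff_nat[symmetric]) auto
        then have "n dvd (i-j)*k" by (simp add: diff_mult_distrib)
        moreover have "i - j < D" using ij(1) by auto
        ultimately show False using assms(5)[of "i-j"] 2 by auto
      qed
    qed
  qed
  moreover have "pet_adj n k (f i) (f ((i+1) mod D))" if "i < D" for i
  proof -
    have "((i+1) mod D * k) mod n = ((i+1)*k) mod n"
    proof (cases "i+1 < D")
      case True then show ?thesis by simp
    next
      case False
      then have "i+1 = D" using that by simp
      then show ?thesis using assms(4) by simp
    qed
    then have "f ((i+1) mod D) = (True, (i*k + k) mod n)" unfolding f_def by (simp add: algebra_simps)
    then show ?thesis using inner_step[of k k n "i*k"] assms(2) unfolding f_def by simp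
  qed
  ultimately have "is_cycle (pet_adj n k) (map f [0..<D])" using D3 by (intro cyc_map) auto
  then show ?thesis using assms(3) by (intro exI[of _ "map f [0..<D]"]) simp
qed

lemma outer_cycle:
  assumes "odd n" "n \<ge> 3"
  shows "\<exists>c. is_cycle (pet_adj n k) c \<and> odd (length c) \<and> length c = n"
proof -
  define f where "f i = (False, i::nat)" for i
  have "inj_on f {..<n}" unfolding f_def by (auto intro: inj_onI)
  moreover have "pet_adj n k (f i) (f ((i+1) mod n))" if "i < n" for i
    using that unfolding f_def pet_adj_def pet_verts_def by auto
  ultimately have "is_cycle (pet_adj n k) (map f [0..<n])" using assms by (intro cyc_map) auto
  then show ?thesis using assms by (intro exI[of _ "map f [0..<n]"]) simp
qed


lemma diff_lin: "(u + a*h) - (u + b*(h::nat)) = (a - b)*h"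
  by (simp add: diff_mult_distrib)

lemma build:
  assumes k: "0 < k" "k < n" and u: "0 < u" "u < n" and v: "0 < v"
    and dv: "n dvd u + v*h" and h: "h = k \<or> h = n - k"
    and nd: "\<And>e. 0 < e \<Longrightarrow> e \<le> v \<Longrightarrow> \<not> n dvd e*h"
  shows "\<exists>c. is_cycle (pet_adj n k) c \<and> length c = u + v + 2"
proof -
  define N where "N = u + v + 2"
  define f where "f i = (if i \<le> u then (False, i) else (True, (u + (i-u-1)*h) mod n))" for i
  have inj: "inj_on f {..<N}"
  proof (rule inj_onI)
    fix i j assume ij: "i \<in> {..<N}" "j \<in> {..<N}" "f i = f j"
    show "i = j"
    proof (cases "i \<le> u")
      case True
      then show ?thesis using ij unfolding f_def by (auto split: if_splits)
    next
      case iu: False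
      show ?thesis
      proof (cases "j \<le> u")
        case True then show ?thesis using ij iu unfolding f_def by (auto split: if_splits)
      next
        case ju: False
        have eq: "(u + (i-u-1)*h) mod n = (u + (j-u-1)*h) mod n" using ij iu ju unfolding f_def by simp
        have lt: "i - u - 1 \<le> v" "j - u - 1 \<le> v" using ij unfolding N_def by auto
        show ?thesis
        proof (rule ccontr)
          assume "i \<noteq> j"
          then consider "i < j" | "j < i" by linarith
          then show False
          proof cases
            case 1
            have "n dvd (u + (j-u-1)*h) - (u + (i-u-1)*h)" using 1 eq
              by (subst mod_eq_dvd_iff_nat[symmetric]) auto
            moreover have "(u + (j-u-1)*h) - (u + (i-u-1)*h) = ((j-u-1) - (i-u-1))*h"
              by (rule diff_lin)
            moreover have "(j-u-1) - (i-u-1) \<le> v" "0 < (j-u-1) - (i-u-1)" using lt 1 iu ju by linarith+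
            ultimately show False using nd by (metis)
          next
            case 2
            have "n dvd (u + (i-u-1)*h) - (u + (j-u-1)*h)" using 2 eq
              by (subst mod_eq_dvd_iff_nat[symmetric]) auto
            moreover have "(u + (i-u-1)*h) - (u + (j-u-1)*h) = ((i-u-1) - (j-u-1))*h"
              by (rule diff_lin)
            moreover have "(i-u-1) - (j-u-1) \<le> v" "0 < (i-u-1) - (j-u-1)" using lt 2 iu ju by linarith+
            ultimately show False using nd by (metis)
          qed
        qed
      qed
    qed
  qed
  have adj: "pet_adj n k (f i) (f ((i+1) mod N))" if iN: "i < N" for i
  proof -
    consider "i < u" | "i = u" | "u < i \<and> i + 1 < N" | "i + 1 = N" using iN by linarith
    then show ?thesis
    proof cases
      case 1
      then have "(i+1) mod N = i+1" unfolding N_def by simp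
      then show ?thesis using 1 u unfolding f_def pet_adj_def pet_verts_def by auto
    next
      case 2
      then have "(i+1) mod N = u+1" unfolding N_def by simp
      then show ?thesis using 2 u unfolding f_def pet_adj_def pet_verts_def by auto
    next
      case 3
      then have m: "(i+1) mod N = i+1" by simp
      have "f i = (True, (u + (i-u-1)*h) mod n)" using 3 unfolding f_def by simp
      moreover have "f (i+1) = (True, (u + (i-u-1)*h + h) mod n)"
      proof -
        have "i + 1 - u - 1 = Suc (i-u-1)" using 3 by linarith
        then show ?thesis using 3 unfolding f_def by (simp add: algebra_simps)
      qed
      ultimately show ?thesis using m inner_step[OF h k(2)] by metis
    next
      case 4
      then have m: "(i+1) mod N = 0" by simp
      have "i - u - 1 = v" using 4 unfolding N_def by simp
      then have "f i = (True, 0)" using 4 dv unfolding f_def N_def by simp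
      moreover have "f 0 = (False, 0)" unfolding f_def by simp
      ultimately show ?thesis using m k unfolding pet_adj_def pet_verts_def by simp
    qed
  qed
  have "is_cycle (pet_adj n k) (map f [0..<N])" using inj adj u v unfolding N_def by (intro cyc_map) auto
  then show ?thesis unfolding N_def by (intro exI[of _ "map f [0..<u+v+2]"]) simp
qed


lemma UB_nontriv:
  assumes k: "0 < k" "k < n" and sol: "ip_solution n k u vp vm r t"
    and nt: "\<not> ip_trivial u vp vm"
  shows "\<exists>c. is_cycle (pet_adj n k) c \<and> odd (length c) \<and> length c \<le> u+vp+vm+2"
proof -
  have feas: "ip_feasible n k u vp vm r t" using sol unfolding ip_solution_def by blast
  define V where "V = int vp - int vm"
  have dv1: "int n dvd int u + int k * V" and od1: "odd (int u + \<bar>V\<bar>)"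
    using feas_UV[OF feas] unfolding V_def by auto
  have mn: "\<And>U' V'. int n dvd U' + int k * V' \<Longrightarrow> odd (\<bar>U'\<bar>+\<bar>V'\<bar>) \<Longrightarrow> int (u+vp+vm) \<le> \<bar>U'\<bar>+\<bar>V'\<bar>"
    using sol_min[OF sol] by blast
  have u0: "u > 0" "vp + vm > 0" using nt unfolding ip_trivial_def by auto
  have absV: "\<bar>V\<bar> = int vp + int vm"
  proof -
    have "int (u+vp+vm) \<le> \<bar>int u\<bar> + \<bar>V\<bar>" using mn[OF dv1] od1 by simp
    moreover have "\<bar>V\<bar> \<le> int vp + int vm" unfolding V_def by simp
    ultimately show ?thesis by simp
  qed
  have V0: "V \<noteq> 0" using absV u0 by auto
  have un: "u < n"
  proof (rule ccontr)
    assume "\<not> u < n"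
    then have nu: "n \<le> u" by simp
    show False
    proof (cases "even n")
      case True
      have d: "int n dvd (int u - int n) + int k * V" using dv1
        by (metis add_diff_eq diff_add_cancel dvd_diff dvd_refl add.commute)
      obtain a where a: "int n = 2*a" using True by (metis even_of_nat_iff evenE)
      obtain b where b: "int u + \<bar>V\<bar> = 2*b+1" using od1 by (blast elim: oddE)
      have "\<bar>int u - int n\<bar> + \<bar>V\<bar> = 2*(b-a)+1" using nu a b by (simp add: algebra_simps)
      then have "odd (\<bar>int u - int n\<bar> + \<bar>V\<bar>)" by simp
      from mn[OF d this] have "int (u+vp+vm) \<le> \<bar>int u - int n\<bar> + \<bar>V\<bar>" .
      then show False using nu absV k by simp
    next
      case False
      have "int (u+vp+vm) \<le> \<bar>int n\<bar> + \<bar>0\<bar>" using False by (intro mn) auto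
      then show False using nu u0 by simp
    qed
  qed
  define v where "v = vp + vm"
  define h where "h = (if V > 0 then k else n - k)"
  have hk: "h = k \<or> h = n - k" unfolding h_def by auto
  have dvh: "n dvd u + v*h"
  proof (cases "V > 0")
    case True
    then have "int (u + v*h) = int u + int k * V" unfolding h_def v_def using absV by simp
    then show ?thesis using dv1 by (metis int_dvd_int_iff)
  next
    case False
    then have "V = - int v" using absV unfolding v_def by simp
    moreover have "h = n - k" using False unfolding h_def by simp
    moreover have "int (v*(n-k)) = int v*(int n - int k)" using k by (simp add: of_nat_diff)
    ultimately have "int (u + v*h) = (int u + int k * V) + int n * int v"
      by (simp add: algebra_simps)
    also have "int n dvd \<dots>" using dv1 by simp
    finally show ?thesis by (metis int_dvd_int_iff)
  qed
  have nd: "\<not> n dvd e*h" if e: "0 < e" "e \<le> v" for e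
  proof
    assume dd: "n dvd e*h"
    have "n dvd e*k"
    proof (cases "h = k")
      case True then show ?thesis using dd by simp
    next
      case False
      then have hh: "h = n - k" using hk by simp
      have "e*h + e*k = e*n" using hh k by (simp add: algebra_simps diff_mult_distrib2)
      then have "n dvd e*h + e*k" by simp
      then show ?thesis using dd by (simp add: dvd_add_right_iff)
    qed
    then have ie: "int n dvd int k * int e" by (metis int_dvd_int_iff of_nat_mult mult.commute)
    show False
    proof (cases "odd e")
      case True
      have "int (u+vp+vm) \<le> \<bar>0\<bar> + \<bar>int e\<bar>" using ie True by (intro mn) auto
      then show False using e u0 unfolding v_def by simp
    next
      case False
      define s where "s = (if V > 0 then 1 else -1::int)"
      define V' where "V' = V - s * int e"
      have d: "int n dvd int u + int k * V'"
      proof -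
        have "int u + int k * V' = (int u + int k * V) - s * (int k * int e)" unfolding V'_def
          by (simp add: algebra_simps)
        moreover have "int n dvd (int u + int k * V) - s * (int k * int e)" 
          using dv1 dvd_mult[OF ie, of s] by (rule dvd_diff)
        ultimately show ?thesis by (simp add: add_diff_eq)
      qed
      have aV': "\<bar>V'\<bar> = \<bar>V\<bar> - int e" unfolding V'_def s_def using absV e V0 unfolding v_def by auto
      obtain a where a: "e = 2*a" using False by blast
      obtain b where b: "int u + \<bar>V\<bar> = 2*b+1" using od1 by (blast elim: oddE)
      have "\<bar>int u\<bar> + \<bar>V'\<bar> = 2*(b - int a) + 1" using aV' a b by simp
      then have "odd (\<bar>int u\<bar> + \<bar>V'\<bar>)" by simp
      from mn[OF d this] have "int (u+vp+vm) \<le> \<bar>int u\<bar> + \<bar>V'\<bar>" .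
      then show False using aV' absV e by simp
    qed
  qed
  obtain c where c: "is_cycle (pet_adj n k) c" "length c = u + v + 2"
    using build[OF k u0(1) un _ dvh hk nd] u0 unfolding v_def by auto
  have "u + v + 2 = 2 * r + 3" using feas unfolding ip_feasible_def v_def by simp
  then have "odd (u + v + 2)" by simp
  then show ?thesis using c unfolding v_def by auto
qed


lemma UB_triv:
  assumes k: "0 < k" "k < n" "3 \<le> n" and sol: "ip_solution n k u vp vm r t"
    and tr: "ip_trivial u vp vm"
  shows "\<exists>c. is_cycle (pet_adj n k) c \<and> odd (length c) \<and> length c \<le> u+vp+vm"
proof -
  have feas: "ip_feasible n k u vp vm r t" using sol unfolding ip_solution_def by blast
  consider "u = 0" | "vp + vm = 0" using tr unfolding ip_trivial_def by blast
  then show ?thesis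
  proof cases
    case 1
    define V where "V = int vp - int vm"
    have dv1: "int n dvd int k * V" and od1: "odd \<bar>V\<bar>"
      using feas_UV[OF feas] 1 unfolding V_def by auto
    define e0 where "e0 = nat \<bar>V\<bar>"
    have ie0: "int e0 = \<bar>V\<bar>" unfolding e0_def by simp
    have oe0: "odd e0" using od1 ie0 by (metis even_of_nat_iff)
    have "int n dvd \<bar>int k * V\<bar>" using dv1 by simp
    then have "int n dvd int (e0 * k)" using ie0 by (simp add: abs_mult mult.commute)
    then have de0: "n dvd e0 * k" by (metis int_dvd_int_iff)
    define P where "P e = (odd e \<and> n dvd e * k)" for e
    define D where "D = (LEAST e. P e)"
    have PD: "P D" unfolding D_def by (rule LeastI[of P e0]) (use oe0 de0 P_def in auto)
    have De0: "D \<le> e0" unfolding D_def by (rule Least_le) (use oe0 de0 P_def in auto)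
    have e0m: "e0 \<le> vp + vm" unfolding e0_def V_def by linarith
    have nd: "\<not> n dvd e * k" if e: "0 < e" "e < D" for e
    proof
      assume dd: "n dvd e * k"
      show False
      proof (cases "odd e")
        case True
        then have "P e" using dd P_def by simp
        then show False using not_less_Least[of e P] e unfolding D_def by blast
      next
        case False
        have "D = (D - e) + e" using e by simp
        then have "odd (D - e)" using PD False unfolding P_def by (metis even_add)
        moreover have "n dvd (D - e) * k" using PD dd unfolding P_def
          by (simp add: diff_mult_distrib dvd_diff_nat)
        ultimately have "P (D - e)" unfolding P_def by simp
        moreover have "D - e < D" using e by simp
        ultimately show False using not_less_Least[of "D - e" P] unfolding D_def by blast
      qed
    qed
    obtain c where c: "is_cycle (pet_adj n k) c" "odd (length c)" "length c = D"
      using inner_cycle[OF k(1,2), of D] PD nd unfolding P_def by blast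
    then show ?thesis using De0 e0m 1 by auto
  next
    case 2
    then have "vp = 0" "vm = 0" by auto
    then have "int u = t * int n" "u = 2*r+1" using feas unfolding ip_feasible_def by auto
    then have dn: "n dvd u" by (metis dvd_triv_right int_dvd_int_iff mult.commute)
    have ou: "odd u" using \<open>u = 2*r+1\<close> by simp
    have "odd n" using dn ou by (metis dvd_trans)
    moreover have "n \<le> u" using dn ou by (metis dvd_imp_le odd_pos)
    ultimately show ?thesis using outer_cycle[of n k] k by force
  qed
qed

lemma lb_sol:
  assumes sol: "ip_solution n k u vp vm r t" and c: "is_cycle (pet_adj n k) c" "odd (length c)"
  shows "u + vp + vm \<le> length c"
    "(\<forall>u' vp' vm' r' t'. ip_solution n k u' vp' vm' r' t' \<longrightarrow> \<not> ip_trivial u' vp' vm')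
       \<Longrightarrow> u + vp + vm + 2 \<le> length c"
proof -
  obtain u' vp' vm' r' t' where F: "ip_feasible n k u' vp' vm' r' t'" "u'+vp'+vm' \<le> length c"
     "ip_trivial u' vp' vm' \<or> u'+vp'+vm'+2 \<le> length c"
    using LB[OF c] by blast
  have m: "u+vp+vm \<le> u'+vp'+vm'" using sol F(1) unfolding ip_solution_def by blast
  then show "u + vp + vm \<le> length c" using F(2) by simp
  assume allnt: "\<forall>u' vp' vm' r' t'. ip_solution n k u' vp' vm' r' t' \<longrightarrow> \<not> ip_trivial u' vp' vm'"
  show "u + vp + vm + 2 \<le> length c"
  proof (cases "u'+vp'+vm'+2 \<le> length c")
    case True then show ?thesis using m by simp
  next
    case False
    then have tr: "ip_trivial u' vp' vm'" using F(3) by blast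
    have "u'+vp'+vm' \<noteq> u+vp+vm"
    proof
      assume "u'+vp'+vm' = u+vp+vm"
      then have "ip_solution n k u' vp' vm' r' t'" using feas_sol[OF sol F(1)] by blast
      then show False using allnt tr by blast
    qed
    moreover have "u+vp+vm = 2*r+1" "u'+vp'+vm' = 2*r'+1" using sol F(1)
      unfolding ip_solution_def ip_feasible_def by auto
    ultimately have "u+vp+vm+2 \<le> u'+vp'+vm'" using m by presburger
    then show ?thesis using F(2) by simp
  qed
qed


theorem theorem8:
  fixes n k :: nat
  assumes "2 < 2 * k" and "2 * k \<le> n"
  shows "((\<exists>u vp vm r t. ip_feasible n k u vp vm r t) \<longleftrightarrow> has_odd_cycle (pet_adj n k))
    \<and> (\<forall>u vp vm r t. ip_solution n k u vp vm r t \<longrightarrow>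
         ((\<exists>u' vp' vm' r' t'. ip_solution n k u' vp' vm' r' t' \<and> ip_trivial u' vp' vm')
             \<longrightarrow> odd_girth (pet_adj n k) = 2 * r + 1)
       \<and> ((\<forall>u' vp' vm' r' t'. ip_solution n k u' vp' vm' r' t' \<longrightarrow> \<not> ip_trivial u' vp' vm')
             \<longrightarrow> odd_girth (pet_adj n k) = 2 * r + 3))"
proof -
  have k: "0 < k" "k < n" "3 \<le> n" using assms by auto
  have ub: "\<exists>c. is_cycle (pet_adj n k) c \<and> odd (length c) \<and> length c \<le> u+vp+vm+2"
    if "ip_solution n k u vp vm r t" for u vp vm r t
  proof (cases "ip_trivial u vp vm")
    case True then show ?thesis using UB_triv[OF k that] by fastforce
  next
    case False then show ?thesis using UB_nontriv[OF k(1,2) that] by blast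
  qed
  have P1: "(\<exists>u vp vm r t. ip_feasible n k u vp vm r t) \<longleftrightarrow> has_odd_cycle (pet_adj n k)"
  proof
    assume "\<exists>u vp vm r t. ip_feasible n k u vp vm r t"
    then obtain u vp vm r t where "ip_solution n k u vp vm r t" using sol_exists by blast
    then show "has_odd_cycle (pet_adj n k)" using ub unfolding has_odd_cycle_def by blast
  next
    assume "has_odd_cycle (pet_adj n k)"
    then obtain c where "is_cycle (pet_adj n k) c" "odd (length c)" unfolding has_odd_cycle_def by blast
    then show "\<exists>u vp vm r t. ip_feasible n k u vp vm r t" using LB by blast
  qed
  have girth: "odd_girth (pet_adj n k) = L"
    if "is_cycle (pet_adj n k) c0" "odd (length c0)" "length c0 = L"
       "\<And>c. is_cycle (pet_adj n k) c \<Longrightarrow> odd (length c) \<Longrightarrow> L \<le> length c" for c0 L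
    unfolding odd_girth_def by (rule Least_equality) (use that in auto)
  have P2: "((\<exists>u' vp' vm' r' t'. ip_solution n k u' vp' vm' r' t' \<and> ip_trivial u' vp' vm')
             \<longrightarrow> odd_girth (pet_adj n k) = 2 * r + 1)
       \<and> ((\<forall>u' vp' vm' r' t'. ip_solution n k u' vp' vm' r' t' \<longrightarrow> \<not> ip_trivial u' vp' vm')
             \<longrightarrow> odd_girth (pet_adj n k) = 2 * r + 3)"
    if sol: "ip_solution n k u vp vm r t" for u vp vm r t
  proof -
    have m: "u + vp + vm = 2*r+1" using sol unfolding ip_solution_def ip_feasible_def by blast
    show ?thesis
    proof (intro conjI impI)
      assume "\<exists>u' vp' vm' r' t'. ip_solution n k u' vp' vm' r' t' \<and> ip_trivial u' vp' vm'"
      then obtain u' vp' vm' r' t' where s': "ip_solution n k u' vp' vm' r' t'" "ip_trivial u' vp' vm'"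
        by blast
      have eq: "u'+vp'+vm' = u+vp+vm" using sol_same[OF s'(1) sol] .
      obtain c0 where c0: "is_cycle (pet_adj n k) c0" "odd (length c0)" "length c0 \<le> u'+vp'+vm'"
        using UB_triv[OF k s'] by blast
      have "u+vp+vm \<le> length c0" using lb_sol(1)[OF sol c0(1,2)] .
      then have "length c0 = 2*r+1" using c0(3) eq m by simp
      then show "odd_girth (pet_adj n k) = 2 * r + 1"
        using girth[OF c0(1,2)] lb_sol(1)[OF sol] m by auto
    next
      assume nt: "\<forall>u' vp' vm' r' t'. ip_solution n k u' vp' vm' r' t' \<longrightarrow> \<not> ip_trivial u' vp' vm'"
      obtain c0 where c0: "is_cycle (pet_adj n k) c0" "odd (length c0)" "length c0 \<le> u+vp+vm+2"
        using ub[OF sol] by blast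
      have "u+vp+vm+2 \<le> length c0" using lb_sol(2)[OF sol c0(1,2) nt] .
      then have "length c0 = 2*r+3" using c0(3) m by simp
      moreover have "2*r+3 \<le> length c" if "is_cycle (pet_adj n k) c" "odd (length c)" for c
        using lb_sol(2)[OF sol that nt] m by simp
      ultimately show "odd_girth (pet_adj n k) = 2 * r + 3"
        using girth[OF c0(1,2)] by blast
    qed
  qed
  show ?thesis using P1 P2 by blast
qed

end
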